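(* Let $\mathcal{S}\subseteq 2^{[n]}$ be a Sperner family and $h:\mathcal{S}\to 2^{[n]}$ a function with $h(S)\subseteq S$ for every $S\in\mathcal{S}$, and suppose $\mathcal{F}=\mathcal{F}(\mathcal{S},h)$ is s-extremal, $\mathcal{F}\subsetneq 2^{[n]}$, and $\mathrm{Sh}(\mathcal{F})=\mathcal{H}(\mathcal{S})$. Then there exists $F\in 2^{[n]}\setminus\mathcal{F}$ such that $\mathcal{F}\cup\{F\}$ is s-extremal if and only if there exists $S_0\in\mathcal{S}$ such that $\mathcal{Q}_{S_0,h(S_0)}\not\subseteq\bigcup_{S\in\mathcal{S}\setminus\{S_0\}}\mathcal{Q}_{S,h(S)}$.
   Context: $[n]=\{1,\dots,n\}$. A Sperner family is a family of sets none of which is contained in another. $\mathcal{F}$ shatters $S$ if $\{F\cap S:F\in\mathcal{F}\}=2^S$; $\mathrm{Sh}(\mathcal{F})$ is the family of shattered sets; $\mathcal{F}$ is s-extremal if $|\mathrm{Sh}(\mathcal{F})|=|\mathcal{F}|$. For $H\subseteq S\subseteq[n]$, $\mathcal{Q}_{S,H}=\{H\cup B: B\subseteq[n]\setminus S\}$. $\mathcal{H}(\mathcal{S})=\{F\subseteq[n]: \text{no } S\in\mathcal{S} \text{ satisfies } S\subseteq F\}$, and $\mathcal{F}(\mathcal{S},h)=2^{[n]}\setminus\bigcup_{S\in\mathcal{S}}\mathcal{Q}_{S,h(S)}$. *)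

theory Defs
  imports Main
begin

definition sperner :: "'a set set \<Rightarrow> bool" where
  "sperner SS \<longleftrightarrow> (\<forall>A\<in>SS. \<forall>B\<in>SS. A \<subseteq> B \<longrightarrow> A = B)"

definition shatters :: "nat set set \<Rightarrow> nat set \<Rightarrow> bool" where
  "shatters FF S \<longleftrightarrow> (\<lambda>F. F \<inter> S) ` FF = Pow S"

definition Sh :: "nat \<Rightarrow> nat set set \<Rightarrow> nat set set" where
  "Sh n FF = {S. S \<subseteq> {1..n} \<and> shatters FF S}"

definition s_extremal :: "nat \<Rightarrow> nat set set \<Rightarrow> bool" where
  "s_extremal n FF \<longleftrightarrow> card (Sh n FF) = card FF"

definition QQ :: "nat \<Rightarrow> nat set \<Rightarrow> nat set \<Rightarrow> nat set set" where
  "QQ n S H = {H \<union> B | B. B \<subseteq> {1..n} - S}"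

definition HH :: "nat \<Rightarrow> nat set set \<Rightarrow> nat set set" where
  "HH n SS = {F. F \<subseteq> {1..n} \<and> \<not> (\<exists>S\<in>SS. S \<subseteq> F)}"

definition FF_of :: "nat \<Rightarrow> nat set set \<Rightarrow> (nat set \<Rightarrow> nat set) \<Rightarrow> nat set set" where
  "FF_of n SS h = Pow {1..n} - (\<Union>S\<in>SS. QQ n S (h S))"

end

theory Submission imports Defs begin

definition ShX :: "nat set \<Rightarrow> nat set set \<Rightarrow> nat set set" where
  "ShX X G = {S. S \<subseteq> X \<and> shatters G S}"

lemma img_sub: "(\<lambda>g. g \<inter> T) ` G \<subseteq> Pow T"
  by blast

lemma shatters_iff: "shatters G T \<longleftrightarrow> Pow T \<subseteq> (\<lambda>g. g \<inter> T) ` G"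
proof
  assume "shatters G T" then show "Pow T \<subseteq> (\<lambda>g. g \<inter> T) ` G"
    unfolding shatters_def by simp
next
  assume "Pow T \<subseteq> (\<lambda>g. g \<inter> T) ` G"
  then show "shatters G T" unfolding shatters_def using img_sub[of T G] by (rule subset_antisym[rotated])
qed

lemma shatters_trace:
  assumes "T \<subseteq> Y"
  shows "shatters ((\<lambda>g. g \<inter> Y) ` G) T \<longleftrightarrow> shatters G T"
proof -
  have "(\<lambda>g. g \<inter> T) ` ((\<lambda>g. g \<inter> Y) ` G) = (\<lambda>g. g \<inter> T) ` G"
    using assms by (auto simp: image_image intro!: image_cong)
  then show ?thesis unfolding shatters_def by simp
qed

lemma finite_ShX: "finite X \<Longrightarrow> finite (ShX X G)"
  unfolding ShX_def by (rule finite_subset[of _ "Pow X"]) auto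

lemma split_card:
  assumes "finite X" "G \<subseteq> Pow X"
  shows "card G = card ((\<lambda>g. g - {x}) ` G) + card {g\<in>G. x\<notin>g \<and> insert x g \<in> G}"
proof -
  define B where "B = {g\<in>G. x\<notin>g \<and> insert x g \<in> G}"
  define G' where "G' = G - insert x ` B"
  have fin: "finite G" by (rule finite_subset[OF assms(2)]) (simp add: assms(1))
  have sub: "insert x ` B \<subseteq> G" unfolding B_def by auto
  have injB: "inj_on (insert x) B" unfolding B_def inj_on_def by auto
  have "card G = card G' + card (insert x ` B)"
    unfolding G'_def using card_Diff_subset[OF finite_subset[OF sub fin] sub]
      card_mono[OF fin sub] by simp
  also have "card (insert x ` B) = card B" using card_image[OF injB] .
  also have "card G' = card ((\<lambda>g. g - {x}) ` G')"
  proof (rule card_image[symmetric], rule inj_onI)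
    fix a b assume a: "a \<in> G'" and b: "b \<in> G'" and e: "a - {x} = b - {x}"
    show "a = b"
    proof (cases "x \<in> a \<longleftrightarrow> x \<in> b")
      case True then show ?thesis using e by blast
    next
      case False
      then show ?thesis
      proof (cases "x \<in> a")
        case True
        with False have "x \<notin> b" by blast
        then have "a = insert x b" using e True by blast
        then have "b \<in> B" using a b \<open>x \<notin> b\<close> unfolding G'_def B_def by auto
        then show ?thesis using a \<open>a = insert x b\<close> unfolding G'_def by auto
      next
        case xa: False
        with False have "x \<in> b" by blast
        then have "b = insert x a" using e xa by blast
        then have "a \<in> B" using a b xa unfolding G'_def B_def by auto
        then show ?thesis using b \<open>b = insert x a\<close> unfolding G'_def by auto
      qed
    qed
  qed
  also have "(\<lambda>g. g - {x}) ` G' = (\<lambda>g. g - {x}) ` G"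
  proof
    show "(\<lambda>g. g - {x}) ` G' \<subseteq> (\<lambda>g. g - {x}) ` G" unfolding G'_def by auto
  next
    show "(\<lambda>g. g - {x}) ` G \<subseteq> (\<lambda>g. g - {x}) ` G'"
    proof
      fix y assume "y \<in> (\<lambda>g. g - {x}) ` G"
      then obtain g where g: "g \<in> G" "y = g - {x}" by auto
      show "y \<in> (\<lambda>g. g - {x}) ` G'"
      proof (cases "g \<in> insert x ` B")
        case False then show ?thesis using g unfolding G'_def by auto
      next
        case True
        then obtain b where b: "b \<in> B" "g = insert x b" by auto
        then have "b \<in> G'" "x \<notin> b" unfolding G'_def B_def by auto
        moreover have "y = b - {x}" using g b \<open>x \<notin> b\<close> by auto
        ultimately show ?thesis by blast
      qed
    qed
  qed
  finally show ?thesis unfolding B_def by simp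
qed

lemma split_sh:
  assumes "finite X" "G \<subseteq> Pow X" "x \<in> X"
  shows "card (ShX X G) \<ge> card (ShX (X - {x}) ((\<lambda>g. g - {x}) ` G))
      + card (ShX (X - {x}) {g\<in>G. x\<notin>g \<and> insert x g \<in> G})"
proof -
  define A where "A = (\<lambda>g. g - {x}) ` G"
  define B where "B = {g\<in>G. x\<notin>g \<and> insert x g \<in> G}"
  have s1: "ShX (X - {x}) A \<subseteq> ShX X G"
  proof
    fix T assume T0: "T \<in> ShX (X - {x}) A"
    then have T1: "T \<subseteq> X - {x}" and "shatters A T" by (simp_all add: ShX_def)
    then have T2: "Pow T \<subseteq> (\<lambda>g. g \<inter> T) ` A" by (simp add: shatters_iff)
    have "(\<lambda>g. g \<inter> T) ` A = (\<lambda>g. g \<inter> T) ` G"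
      unfolding A_def image_image using T1 by (intro image_cong) auto
    then have "shatters G T" using T2 by (simp add: shatters_iff)
    moreover have "T \<subseteq> X" using T1 by blast
    ultimately show "T \<in> ShX X G" by (simp add: ShX_def)
  qed
  have s2: "insert x ` ShX (X - {x}) B \<subseteq> ShX X G"
  proof
    fix U assume "U \<in> insert x ` ShX (X - {x}) B"
    then obtain T where U: "U = insert x T" and T0: "T \<in> ShX (X - {x}) B" by blast
    then have T1: "T \<subseteq> X - {x}" and "shatters B T" by (simp_all add: ShX_def)
    then have T2: "Pow T \<subseteq> (\<lambda>g. g \<inter> T) ` B" by (simp add: shatters_iff)
    have "Pow U \<subseteq> (\<lambda>g. g \<inter> U) ` G"
    proof
      fix P assume PU: "P \<in> Pow U"
      then have "P - {x} \<in> Pow T" using U by blast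
      then have "P - {x} \<in> (\<lambda>g. g \<inter> T) ` B" by (rule subsetD[OF T2])
      then obtain b where b: "b \<in> B" "P - {x} = b \<inter> T" by blast
      show "P \<in> (\<lambda>g. g \<inter> U) ` G"
      proof (cases "x \<in> P")
        case True
        have i1: "insert x b \<in> G" using b(1) unfolding B_def by blast
        have PU': "P \<subseteq> insert x T" using PU U by blast
        have i2: "P = insert x b \<inter> U" unfolding U using b(2) True PU' by blast
        show ?thesis by (rule image_eqI[where f="\<lambda>g. g \<inter> U", OF i2 i1])
      next
        case False
        have i1: "b \<in> G" "x \<notin> b" using b(1) unfolding B_def by blast+
        have PU': "P \<subseteq> insert x T" using PU U by blast
        have i2: "P = b \<inter> U" unfolding U using b(2) False i1(2) PU' by blast
        show ?thesis by (rule image_eqI[where f="\<lambda>g. g \<inter> U", OF i2 i1(1)])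
      qed
    qed
    then have "shatters G U" by (simp add: shatters_iff)
    moreover have "U \<subseteq> X" using U T1 assms(3) by blast
    ultimately show "U \<in> ShX X G" by (simp add: ShX_def)
  qed
  have disj: "ShX (X - {x}) A \<inter> insert x ` ShX (X - {x}) B = {}"
    unfolding ShX_def by auto
  have inj: "inj_on (insert x) (ShX (X - {x}) B)"
    unfolding ShX_def inj_on_def by blast
  have fin1: "finite (ShX (X - {x}) A)" "finite (ShX (X - {x}) B)"
    using finite_ShX assms(1) by auto
  have "card (ShX (X - {x}) A) + card (ShX (X - {x}) B)
      = card (ShX (X - {x}) A \<union> insert x ` ShX (X - {x}) B)"
    using card_Un_disjoint[OF fin1(1) finite_imageI[OF fin1(2)] disj] card_image[OF inj] by simp
  also have "\<dots> \<le> card (ShX X G)"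
    by (rule card_mono[OF finite_ShX[OF assms(1)]]) (use s1 s2 in auto)
  finally show ?thesis unfolding A_def B_def .
qed

lemma pajor:
  assumes "finite X" "G \<subseteq> Pow X"
  shows "card G \<le> card (ShX X G)"
  using assms
proof (induction X arbitrary: G rule: finite_induct)
  case empty
  then have "G = {} \<or> G = {{}}" by auto
  then show ?case
  proof
    assume "G = {}" then show ?thesis by simp
  next
    assume G: "G = {{}}"
    have "ShX {} G = {{}}" unfolding ShX_def shatters_def G by auto
    then show ?thesis using G by simp
  qed
next
  case (insert x F)
  let ?A = "(\<lambda>g. g - {x}) ` G"
  let ?B = "{g\<in>G. x\<notin>g \<and> insert x g \<in> G}"
  have X: "insert x F - {x} = F" using insert(2) by auto
  have "card G = card ?A + card ?B"
    using split_card[OF _ insert(4)] insert(1) by simp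
  also have "\<dots> \<le> card (ShX F ?A) + card (ShX F ?B)"
    using insert(3)[of ?A] insert(3)[of ?B] insert(4) by fastforce
  also have "\<dots> \<le> card (ShX (insert x F) G)"
    using split_sh[OF _ insert(4), of x] insert(1) X by simp
  finally show ?case .
qed


lemma restrict_ineq:
  assumes "finite D" "finite Y" "D \<inter> Y = {}" "G \<subseteq> Pow (Y \<union> D)"
  shows "int (card (ShX Y ((\<lambda>g. g \<inter> Y) ` G))) - int (card ((\<lambda>g. g \<inter> Y) ` G))
      \<le> int (card (ShX (Y \<union> D) G)) - int (card G)"
  using assms
proof (induction D arbitrary: G rule: finite_induct)
  case empty
  have "\<forall>g\<in>G. g \<inter> Y = g" using empty.prems by auto
  then have "(\<lambda>g. g \<inter> Y) ` G = G" by (simp add: image_cong[OF refl, of G _ id, simplified])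
  then show ?case by simp
next
  case (insert x D)
  define A where "A = (\<lambda>g. g - {x}) ` G"
  define B where "B = {g\<in>G. x\<notin>g \<and> insert x g \<in> G}"
  have xY: "x \<notin> Y" using insert.prems by auto
  have X: "(Y \<union> insert x D) - {x} = Y \<union> D" using insert.hyps(2) xY by auto
  have AP: "A \<subseteq> Pow (Y \<union> D)" using insert.prems(3) unfolding A_def by auto
  have BP: "B \<subseteq> Pow (Y \<union> D)" using insert.prems(3) unfolding B_def by auto
  have tr: "(\<lambda>g. g \<inter> Y) ` A = (\<lambda>g. g \<inter> Y) ` G"
    unfolding A_def image_image using xY by (auto intro!: image_cong)
  have fX: "finite (Y \<union> insert x D)" using insert by auto
  have IH: "int (card (ShX Y ((\<lambda>g. g \<inter> Y) ` A))) - int (card ((\<lambda>g. g \<inter> Y) ` A))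
      \<le> int (card (ShX (Y \<union> D) A)) - int (card A)"
    using insert.IH[OF insert.prems(1) _ AP] insert.prems(2) by auto
  have c1: "card G = card A + card B"
    unfolding A_def B_def using split_card[OF fX insert.prems(3)] .
  have c2: "card (ShX (Y \<union> insert x D) G) \<ge> card (ShX (Y \<union> D) A) + card (ShX (Y \<union> D) B)"
    unfolding A_def B_def using split_sh[OF fX insert.prems(3), of x] X by simp
  have c3: "card B \<le> card (ShX (Y \<union> D) B)"
    using pajor[OF _ BP] insert by auto
  have c1': "int (card G) = int (card A) + int (card B)" using c1 by simp
  have c2': "int (card (ShX (Y \<union> D) A)) + int (card (ShX (Y \<union> D) B)) \<le> int (card (ShX (Y \<union> insert x D) G))"
    using c2 by linarith
  have c3': "int (card B) \<le> int (card (ShX (Y \<union> D) B))" using c3 by simp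
  have IH': "int (card (ShX Y ((\<lambda>g. g \<inter> Y) ` G))) - int (card ((\<lambda>g. g \<inter> Y) ` G))
      \<le> int (card (ShX (Y \<union> D) A)) - int (card A)" using IH unfolding tr .
  show ?case using IH' c1' c2' c3' by linarith
qed

lemma shatters_mono: "shatters G T \<Longrightarrow> G \<subseteq> G' \<Longrightarrow> shatters G' T"
  unfolding shatters_iff shatters_def by blast

lemma shatters_sub:
  assumes "shatters G T" "S \<subseteq> T"
  shows "shatters G S"
  unfolding shatters_iff
proof
  fix P assume "P \<in> Pow S"
  then have "P \<in> Pow T" using assms(2) by auto
  then obtain g where "g \<in> G" "P = g \<inter> T" using assms(1) unfolding shatters_iff by blast
  then show "P \<in> (\<lambda>g. g \<inter> S) ` G" using assms(2) \<open>P \<in> Pow S\<close>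
    by (intro image_eqI[where x=g]) auto
qed

lemma QQ_char:
  assumes "S \<subseteq> {1..n}" "H \<subseteq> S"
  shows "QQ n S H = {g. g \<subseteq> {1..n} \<and> g \<inter> S = H}"
proof
  show "QQ n S H \<subseteq> {g. g \<subseteq> {1..n} \<and> g \<inter> S = H}"
    unfolding QQ_def using assms by auto
next
  show "{g. g \<subseteq> {1..n} \<and> g \<inter> S = H} \<subseteq> QQ n S H"
  proof
    fix g assume "g \<in> {g. g \<subseteq> {1..n} \<and> g \<inter> S = H}"
    then have "g = H \<union> (g - S)" "g - S \<subseteq> {1..n} - S" by auto
    then show "g \<in> QQ n S H" unfolding QQ_def by blast
  qed
qed


theorem lemma17:
  fixes n :: nat and SS :: "nat set set" and h :: "nat set \<Rightarrow> nat set"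
  assumes "SS \<subseteq> Pow {1..n}"
    and "sperner SS"
    and "\<forall>S\<in>SS. h S \<subseteq> S"
    and "s_extremal n (FF_of n SS h)"
    and "FF_of n SS h \<subset> Pow {1..n}"
    and "Sh n (FF_of n SS h) = HH n SS"
  shows "(\<exists>F \<in> Pow {1..n} - FF_of n SS h. s_extremal n (FF_of n SS h \<union> {F}))
    \<longleftrightarrow> (\<exists>S0\<in>SS. \<not> (QQ n S0 (h S0) \<subseteq> (\<Union>S\<in>SS - {S0}. QQ n S (h S))))"
proof -
  define X where "X = {1..n::nat}"
  define F where "F = FF_of n SS h"
  have finX: "finite X" unfolding X_def by simp
  have SSX: "\<And>S. S \<in> SS \<Longrightarrow> S \<subseteq> X" using assms(1) unfolding X_def by auto
  have hS: "\<And>S. S \<in> SS \<Longrightarrow> h S \<subseteq> S" using assms(3) by auto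
  have QQc: "QQ n S (h S) = {g. g \<subseteq> X \<and> g \<inter> S = h S}" if "S \<in> SS" for S
    unfolding X_def by (rule QQ_char) (use SSX[OF that] hS[OF that] in \<open>simp_all add: X_def\<close>)
  have UQ: "(\<Union>S\<in>SS. QQ n S (h S)) = (\<Union>S\<in>SS. {g. g \<subseteq> X \<and> g \<inter> S = h S})"
    by (rule SUP_cong[OF refl QQc])
  have Fc: "F = {g. g \<subseteq> X \<and> (\<forall>S\<in>SS. g \<inter> S \<noteq> h S)}"
    unfolding F_def FF_of_def UQ unfolding X_def by blast
  have FX: "F \<subseteq> Pow X" using Fc by auto
  have finF: "finite F" by (rule finite_subset[OF FX]) (simp add: finX)
  have ShX_eq: "\<And>G. Sh n G = ShX X G" unfolding Sh_def ShX_def X_def by simp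
  have ShF: "ShX X F = HH n SS" using assms(6) ShX_eq unfolding F_def by simp
  have ext: "card (ShX X F) = card F"
    using assms(4) ShX_eq unfolding s_extremal_def F_def by simp
  have HHc: "HH n SS = {T. T \<subseteq> X \<and> \<not> (\<exists>S\<in>SS. S \<subseteq> T)}"
    unfolding HH_def X_def by simp
  have key: "(\<lambda>g. g \<inter> S) ` F = Pow S - {h S}" if S: "S \<in> SS" for S
  proof -
    let ?tr = "(\<lambda>g. g \<inter> S) ` F"
    have finS: "finite S" using finite_subset[OF SSX[OF S] finX] .
    have sub: "?tr \<subseteq> Pow S - {h S}"
    proof
      fix P assume "P \<in> ?tr"
      then obtain g where g: "g \<in> F" "P = g \<inter> S" by blast
      then have "g \<inter> S \<noteq> h S" using S unfolding Fc by blast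
      then show "P \<in> Pow S - {h S}" using g(2) by blast
    qed
    have e1: "T \<in> ShX S ?tr \<longleftrightarrow> T \<subseteq> S \<and> shatters F T" for T
    proof -
      have "T \<in> ShX S ?tr \<longleftrightarrow> T \<subseteq> S \<and> shatters ?tr T" by (simp add: ShX_def)
      also have "\<dots> \<longleftrightarrow> T \<subseteq> S \<and> shatters F T" using shatters_trace[of T S F] by blast
      finally show ?thesis .
    qed
    have e2: "shatters F T \<longleftrightarrow> T \<in> HH n SS" if "T \<subseteq> S" for T
    proof -
      have "T \<subseteq> X" using that SSX[OF S] by blast
      then have "shatters F T \<longleftrightarrow> T \<in> ShX X F" by (simp add: ShX_def)
      then show ?thesis unfolding ShF .
    qed
    have e3: "T \<in> HH n SS \<longleftrightarrow> T \<noteq> S" if T: "T \<subseteq> S" for T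
    proof
      assume "T \<in> HH n SS"
      then have "\<not> (\<exists>S'\<in>SS. S' \<subseteq> T)" unfolding HHc by blast
      then show "T \<noteq> S" using S by blast
    next
      assume "T \<noteq> S"
      have "T \<subseteq> X" using T SSX[OF S] by blast
      moreover have "\<not> (\<exists>S'\<in>SS. S' \<subseteq> T)"
      proof
        assume "\<exists>S'\<in>SS. S' \<subseteq> T"
        then obtain S' where S': "S' \<in> SS" "S' \<subseteq> T" by blast
        then have "S' \<subseteq> S" using T by blast
        then have "S' = S" using assms(2) S S'(1) unfolding sperner_def by blast
        then show False using \<open>T \<noteq> S\<close> S'(2) T by blast
      qed
      ultimately show "T \<in> HH n SS" unfolding HHc by blast
    qed
    have shtr: "ShX S ?tr = Pow S - {S}"
    proof (rule set_eqI)
      fix T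
      show "T \<in> ShX S ?tr \<longleftrightarrow> T \<in> Pow S - {S}"
        using e1[of T] e2[of T] e3[of T] by blast
    qed
    have XS: "S \<union> (X - S) = X" using SSX[OF S] by blast
    have "int (card (ShX S ?tr)) - int (card ?tr) \<le> int (card (ShX (S \<union> (X - S)) F)) - int (card F)"
      by (rule restrict_ineq) (use finX finS FX XS in auto)
    then have "int (card (ShX S ?tr)) - int (card ?tr) \<le> int (card (ShX X F)) - int (card F)"
      unfolding XS .
    then have "card (Pow S - {S}) \<le> card ?tr" using shtr ext by simp
    moreover have "card (Pow S - {S}) = card (Pow S - {h S})"
      using hS[OF S] finS by simp
    ultimately have "card (Pow S - {h S}) \<le> card ?tr" by simp
    moreover have "finite (Pow S - {h S})" using finS by simp
    ultimately show ?thesis using card_seteq[OF _ sub] by blast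
  qed
  define M where "M = (\<lambda>F'. {S\<in>SS. F' \<inter> S = h S})"
  have ShG: "ShX X (insert F' F) = HH n SS \<union> M F'" if F': "F' \<in> Pow X - F" for F'
  proof
    show "ShX X (insert F' F) \<subseteq> HH n SS \<union> M F'"
    proof
      fix T assume T: "T \<in> ShX X (insert F' F)"
      show "T \<in> HH n SS \<union> M F'"
      proof (cases "T \<in> HH n SS")
        case True then show ?thesis by (rule UnI1)
      next
        case False
        have TX: "T \<subseteq> X" and shT: "shatters (insert F' F) T" using T unfolding ShX_def by simp_all
        have PT: "Pow T \<subseteq> (\<lambda>g. g \<inter> T) ` insert F' F" using shT unfolding shatters_iff .
        have "\<exists>S\<in>SS. S \<subseteq> T" using False TX unfolding HHc by blast
        then obtain S where S: "S \<in> SS" "S \<subseteq> T" by blast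
        have hSS: "h S \<subseteq> S" using hS[OF S(1)] .
        have notF: "g \<notin> F" if "g \<inter> S = h S" for g
        proof
          assume "g \<in> F"
          then have "\<forall>S\<in>SS. g \<inter> S \<noteq> h S" unfolding Fc by blast
          then show False using that S(1) by blast
        qed
        have hT: "h S \<in> Pow T" using hSS S(2) by blast
        then have "h S \<in> (\<lambda>g. g \<inter> T) ` insert F' F" using PT by blast
        then obtain g1 where g1: "g1 \<in> insert F' F" "h S = g1 \<inter> T" by blast
        have g1S: "g1 \<inter> S = h S" using g1(2) S(2) hSS by blast
        then have "g1 \<notin> F" by (rule notF)
        then have g1F: "g1 = F'" using g1(1) by blast
        then have F'S: "F' \<inter> S = h S" using g1S by simp
        have "T = S"
        proof (rule ccontr)
          assume "T \<noteq> S"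
          then obtain y where y: "y \<in> T" "y \<notin> S" using S(2) by blast
          have "insert y (h S) \<in> Pow T" using hT y(1) by blast
          then have "insert y (h S) \<in> (\<lambda>g. g \<inter> T) ` insert F' F" using PT by blast
          then obtain g2 where g2: "g2 \<in> insert F' F" "insert y (h S) = g2 \<inter> T" by blast
          have "g2 \<inter> S = (g2 \<inter> T) \<inter> S" using S(2) by blast
          also have "\<dots> = insert y (h S) \<inter> S" using g2(2) by simp
          also have "\<dots> = h S" using y(2) hSS by blast
          finally have "g2 \<inter> S = h S" .
          then have "g2 \<notin> F" by (rule notF)
          then have "g2 = F'" using g2(1) by blast
          then have "insert y (h S) = h S" using g1(2) g2(2) g1F by simp
          then show False using y(2) hSS by blast
        qed
        then have "T \<in> M F'" unfolding M_def using S(1) F'S by blast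
        then show ?thesis by (rule UnI2)
      qed
    qed
  next
    show "HH n SS \<union> M F' \<subseteq> ShX X (insert F' F)"
    proof
      fix T assume "T \<in> HH n SS \<union> M F'"
      then show "T \<in> ShX X (insert F' F)"
      proof
        assume "T \<in> HH n SS"
        then have "T \<in> ShX X F" unfolding ShF .
        then have "T \<subseteq> X" "shatters F T" unfolding ShX_def by simp_all
        moreover have "shatters (insert F' F) T"
          using shatters_mono[OF \<open>shatters F T\<close>, of "insert F' F"] by blast
        ultimately show ?thesis unfolding ShX_def by simp
      next
        assume "T \<in> M F'"
        then have T: "T \<in> SS" "F' \<inter> T = h T" unfolding M_def by blast+
        have "Pow T \<subseteq> (\<lambda>g. g \<inter> T) ` insert F' F"
        proof
          fix P assume P: "P \<in> Pow T"
          show "P \<in> (\<lambda>g. g \<inter> T) ` insert F' F"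
          proof (cases "P = h T")
            case True
            then have "P = F' \<inter> T" using T(2) by simp
            then show ?thesis by blast
          next
            case False
            then have "P \<in> (\<lambda>g. g \<inter> T) ` F" using key[OF T(1)] P by blast
            then show ?thesis by blast
          qed
        qed
        then have "shatters (insert F' F) T" unfolding shatters_iff .
        moreover have "T \<subseteq> X" using SSX[OF T(1)] .
        ultimately show ?thesis unfolding ShX_def by simp
      qed
    qed
  qed
  have finSS: "finite SS" by (rule finite_subset[OF assms(1)]) simp
  have extG: "s_extremal n (F \<union> {F'}) \<longleftrightarrow> card (M F') = 1" if F': "F' \<in> Pow X - F" for F'
  proof -
    have finH: "finite (HH n SS)" unfolding ShF[symmetric] by (rule finite_ShX[OF finX])
    have finM: "finite (M F')" unfolding M_def using finSS by simp
    have dj: "HH n SS \<inter> M F' = {}" unfolding HHc M_def by auto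
    have "card (ShX X (insert F' F)) = card F + card (M F')"
      using ShG[OF F'] card_Un_disjoint[OF finH finM dj] ShF ext by simp
    moreover have "card (insert F' F) = card F + 1" using F' finF by simp
    ultimately show ?thesis unfolding s_extremal_def using ShX_eq by simp
  qed
  show ?thesis
  proof
    assume "\<exists>F' \<in> Pow {1..n} - FF_of n SS h. s_extremal n (FF_of n SS h \<union> {F'})"
    then obtain F' where F'0: "F' \<in> Pow {1..n} - FF_of n SS h" "s_extremal n (FF_of n SS h \<union> {F'})"
      by blast
    have F'1: "F' \<in> Pow X - F" using F'0(1) unfolding X_def F_def .
    have "card (M F') = 1" using extG[OF F'1] F'0(2) unfolding F_def by simp
    then obtain S0 where M: "M F' = {S0}" using card_1_singletonE by blast
    then have S0: "S0 \<in> SS" "F' \<inter> S0 = h S0" unfolding M_def by auto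
    have "F' \<in> QQ n S0 (h S0)" unfolding QQc[OF S0(1)] using S0 F'1 by blast
    moreover have "F' \<notin> (\<Union>S\<in>SS - {S0}. QQ n S (h S))"
    proof
      assume "F' \<in> (\<Union>S\<in>SS - {S0}. QQ n S (h S))"
      then obtain S where S: "S \<in> SS" "S \<noteq> S0" "F' \<in> QQ n S (h S)" by blast
      then have "F' \<inter> S = h S" unfolding QQc[OF S(1)] by blast
      then have "S \<in> M F'" using S(1) unfolding M_def by blast
      then show False using M \<open>S \<noteq> S0\<close> by blast
    qed
    ultimately show "\<exists>S0\<in>SS. \<not> (QQ n S0 (h S0) \<subseteq> (\<Union>S\<in>SS - {S0}. QQ n S (h S)))"
      using S0(1) by blast
  next
    assume "\<exists>S0\<in>SS. \<not> (QQ n S0 (h S0) \<subseteq> (\<Union>S\<in>SS - {S0}. QQ n S (h S)))"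
    then obtain S0 g where S0: "S0 \<in> SS" "g \<in> QQ n S0 (h S0)"
      and ng: "g \<notin> (\<Union>S\<in>SS - {S0}. QQ n S (h S))" by blast
    have gX: "g \<subseteq> X" "g \<inter> S0 = h S0" using S0(2) unfolding QQc[OF S0(1)] by blast+
    have "M g = {S0}"
    proof
      show "M g \<subseteq> {S0}"
      proof
        fix S assume "S \<in> M g"
        then have S: "S \<in> SS" "g \<inter> S = h S" unfolding M_def by blast+
        then have "g \<in> QQ n S (h S)" unfolding QQc[OF S(1)] using gX(1) by blast
        then show "S \<in> {S0}" using ng S(1) by blast
      qed
    next
      show "{S0} \<subseteq> M g" unfolding M_def using S0(1) gX(2) by blast
    qed
    then have cM: "card (M g) = 1" by simp
    have "g \<notin> F" unfolding Fc using S0(1) gX(2) by blast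
    then have g1: "g \<in> Pow X - F" using gX(1) by blast
    have "s_extremal n (F \<union> {g})" using extG[OF g1] cM by simp
    moreover have "g \<in> Pow {1..n} - FF_of n SS h" using g1 unfolding X_def F_def .
    ultimately show "\<exists>F' \<in> Pow {1..n} - FF_of n SS h. s_extremal n (FF_of n SS h \<union> {F'})"
      unfolding F_def by blast
  qed
qed

end
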